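(* Fix an increasing sequence of positive integers $(q_\ell)_{\ell\in\mathcal L}$, $\mathcal L$ a (finite or infinite) set of consecutive integers starting at $0$, and for $d\in(\frac12(1-1/q_0),\frac12)$ let $\nu_c(d)$ be the critical exponent defined below. Then: (i) if $q_0=1$, $\nu_c(d)$ is non-increasing in $d$; (ii) if $q_0\ge2$, $\nu_c(d)$ is non-decreasing in $d$.
   Context: For $q\ge1$, $\delta(q)=qd-(q-1)/2$ and $\delta_+(q)=\max(\delta(q),0)$. For $r\ge0$ let $I_r=\{\ell\in\mathcal L:\ell+1\in\mathcal L,\ q_{\ell+1}=q_\ell+r+1\}$ and $\ell_r=\min I_r$ when $I_r\ne\emptyset$; $\mathcal R_d=\{r\ge0:I_r\ne\emptyset,\ \delta(r+1)>0\}$; $J_d=\{\ell\in\mathcal L:\ell+1\in\mathcal L,\ \delta(q_{\ell+1}-q_\ell)>0\}$. Critical exponent: $\nu_c=\infty$ if $\mathcal L=\{0\}$; $\infty$ if $q_0=1,d\le1/4,I_0=\emptyset$; $\frac{d+1/2-2\delta_+(q_{\ell_0})}{d}$ if $q_0=1,d\le1/4,I_0\ne\emptyset$; $\frac{1-2\delta_+(q_1-1)}{2d-1/2}$ if $q_0=1,d>1/4,1\in\mathcal L,J_d=\emptyset$; $\min\big(\frac{1-2\delta_+(q_1-1)}{2d-1/2},\frac{2d+1/2-2\delta_+(q_{\ell_r})-\delta(r+1)}{\delta(r+1)}:r\in\mathcal R_d\big)$ if $q_0=1,d>1/4,J_d\ne\emptyset$; $\infty$ if $q_0\ge2,I_0=\emptyset$;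 $1+\frac{4(\delta(q_0)-\delta_+(q_{\ell_0}))}{1-2d}$ if $q_0\ge2,I_0\ne\emptyset$. Monotonicity is in the extended reals $(0,\infty]$. *)

theory Defs
  imports Complex_Main "HOL-Library.Extended_Real"
begin

definition admissible_seq :: "nat set \<Rightarrow> (nat \<Rightarrow> nat) \<Rightarrow> bool" where
  "admissible_seq L q \<longleftrightarrow> 0 \<in> L \<and> (\<forall>l. Suc l \<in> L \<longrightarrow> l \<in> L)
     \<and> (\<forall>l\<in>L. q l > 0) \<and> (\<forall>l\<in>L. \<forall>m\<in>L. l < m \<longrightarrow> q l < q m)"

definition delta :: "real \<Rightarrow> real \<Rightarrow> real" where
  "delta d x = x * d - (x - 1) / 2"

definition delta_plus :: "real \<Rightarrow> real \<Rightarrow> real" where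
  "delta_plus d x = max (delta d x) 0"

definition Iset :: "nat set \<Rightarrow> (nat \<Rightarrow> nat) \<Rightarrow> nat \<Rightarrow> nat set" where
  "Iset L q r = {l \<in> L. Suc l \<in> L \<and> q (Suc l) = q l + r + 1}"

definition ell :: "nat set \<Rightarrow> (nat \<Rightarrow> nat) \<Rightarrow> nat \<Rightarrow> nat" where
  "ell L q r = (LEAST l. l \<in> Iset L q r)"

definition Rset :: "nat set \<Rightarrow> (nat \<Rightarrow> nat) \<Rightarrow> real \<Rightarrow> nat set" where
  "Rset L q d = {r. Iset L q r \<noteq> {} \<and> delta d (real (r + 1)) > 0}"

definition Jset :: "nat set \<Rightarrow> (nat \<Rightarrow> nat) \<Rightarrow> real \<Rightarrow> nat set" where
  "Jset L q d = {l \<in> L. Suc l \<in> L \<and> delta d (real (q (Suc l)) - real (q l)) > 0}"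

text \<open>The minimum in the case q0 = 1, d > 1/4, J_d nonempty is over a finite set
  (R_d is finite since d < 1/2), written as an infimum.\<close>

definition nu_c :: "nat set \<Rightarrow> (nat \<Rightarrow> nat) \<Rightarrow> real \<Rightarrow> ereal" where
  "nu_c L q d =
    (if L = {0} then \<infinity>
     else if q 0 = 1 then
       (if d \<le> 1/4 then
          (if Iset L q 0 = {} then \<infinity>
           else ereal ((d + 1/2 - 2 * delta_plus d (real (q (ell L q 0)))) / d))
        else
          (if Jset L q d = {} then
             ereal ((1 - 2 * delta_plus d (real (q 1) - 1)) / (2*d - 1/2))
           else
             min (ereal ((1 - 2 * delta_plus d (real (q 1) - 1)) / (2*d - 1/2)))
                 (INF r\<in>Rset L q d.
                    ereal ((2*d + 1/2 - 2 * delta_plus d (real (q (ell L q r)))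
                             - delta d (real (r + 1))) / delta d (real (r + 1))))))
     else
       (if Iset L q 0 = {} then \<infinity>
        else ereal (1 + 4 * (delta d (real (q 0)) - delta_plus d (real (q (ell L q 0))))
                         / (1 - 2*d))))"

end

theory Submission imports Defs begin

lemma dp_cases: "delta_plus d Q = (if delta d Q \<le> 0 then 0 else delta d Q)"
  by (simp add: delta_plus_def max_def)

lemma delta_mono: "0 \<le> x \<Longrightarrow> d1 \<le> d2 \<Longrightarrow> delta d1 x \<le> delta d2 x"
proof -
  assume "0 \<le> x" "d1 \<le> d2"
  hence "0 \<le> x*(d2-d1)" by simp
  moreover have "delta d2 x - delta d1 x = x*(d2-d1)" unfolding delta_def by (algebra | simp add: field_simps)
  ultimately show ?thesis by linarith
qed

lemma div_cross: "0 < b \<Longrightarrow> 0 < d \<Longrightarrow> 0 \<le> c*b - a*d \<Longrightarrow> a/b \<le> c/(d::real)"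
  by (simp add: divide_simps)

lemma L1:
  fixes Q d1 d2 :: real
  assumes a: "1 \<le> Q" "0 < d1" "d1 \<le> d2" "d2 < 1/2"
  shows "(d2 + 1/2 - 2*delta_plus d2 Q)/d2 \<le> (d1 + 1/2 - 2*delta_plus d1 Q)/d1"
proof -
  define P1 where "P1 = delta d1 Q"
  define P2 where "P2 = delta d2 Q"
  have e1: "P1 = Q*d1 - (Q-1)/2" "P2 = Q*d2 - (Q-1)/2" unfolding P1_def P2_def delta_def by simp_all
  have m: "P1 \<le> P2" unfolding P1_def P2_def using a by (intro delta_mono) auto
  have "0 \<le> (d1 + 1/2 - 2*delta_plus d1 Q) * d2 - (d2 + 1/2 - 2*delta_plus d2 Q) * d1"
  proof (cases "P1 \<le> 0"; cases "P2 \<le> 0")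
    assume b: "P1 \<le> 0" "P2 \<le> 0"
    have dv: "delta_plus d1 Q = 0" "delta_plus d2 Q = 0" using b by (simp_all add: dp_cases P1_def[symmetric] P2_def[symmetric])
    have "(d1 + 1/2 - 2*delta_plus d1 Q) * d2 - (d2 + 1/2 - 2*delta_plus d2 Q) * d1 = d2/2-d1/2" unfolding dv e1 by (algebra | simp add: field_simps)
    thus ?thesis using a b by linarith
  next
    assume b: "P1 \<le> 0" "\<not> P2 \<le> 0"
    have dv: "delta_plus d1 Q = 0" "delta_plus d2 Q = P2" using b by (simp_all add: dp_cases P1_def[symmetric] P2_def[symmetric])
    have "(d1 + 1/2 - 2*delta_plus d1 Q) * d2 - (d2 + 1/2 - 2*delta_plus d2 Q) * d1 = d2/2-d1/2 + 2*(d1*P2)" unfolding dv e1 by (algebra | simp add: field_simps)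
    moreover have "0 \<le> d1*P2" using a b by simp
    ultimately show ?thesis using a b by linarith
  next
    assume b: "\<not> P1 \<le> 0" "P2 \<le> 0"
    thus ?thesis using m by simp
  next
    assume b: "\<not> P1 \<le> 0" "\<not> P2 \<le> 0"
    have dv: "delta_plus d1 Q = P1" "delta_plus d2 Q = P2" using b by (simp_all add: dp_cases P1_def[symmetric] P2_def[symmetric])
    have "(d1 + 1/2 - 2*delta_plus d1 Q) * d2 - (d2 + 1/2 - 2*delta_plus d2 Q) * d1 = (d2-d1)*(Q-1/2)" unfolding dv e1 by (algebra | simp add: field_simps)
    moreover have "0 \<le> (d2-d1)*(Q-1/2)" using a by simp
    ultimately show ?thesis using a b by linarith
  qed
  thus ?thesis using a by (intro div_cross) auto
qed

lemma L2:
  fixes m d1 d2 :: real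
  assumes a: "1 \<le> m" "1/4 < d1" "d1 \<le> d2" "d2 < 1/2"
  shows "(1 - 2 * delta_plus d2 m) / (2*d2 - 1/2) \<le> (1 - 2 * delta_plus d1 m) / (2*d1 - 1/2)"
proof -
  define P1 where "P1 = delta d1 m"
  define P2 where "P2 = delta d2 m"
  have e1: "P1 = m*d1 - (m-1)/2" "P2 = m*d2 - (m-1)/2" unfolding P1_def P2_def delta_def by simp_all
  have mm: "P1 \<le> P2" unfolding P1_def P2_def using a by (intro delta_mono) auto
  have "0 \<le> (1 - 2 * delta_plus d1 m) * (2*d2 - 1/2) - (1 - 2 * delta_plus d2 m) * (2*d1 - 1/2)"
  proof (cases "P1 \<le> 0"; cases "P2 \<le> 0")
    assume b: "P1 \<le> 0" "P2 \<le> 0"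
    have dv: "delta_plus d1 m = 0" "delta_plus d2 m = 0" using b by (simp_all add: dp_cases P1_def[symmetric] P2_def[symmetric])
    have "(1 - 2 * delta_plus d1 m) * (2*d2 - 1/2) - (1 - 2 * delta_plus d2 m) * (2*d1 - 1/2) = 2*d2-2*d1" unfolding dv e1 by (algebra | simp add: field_simps)
    thus ?thesis using a b by linarith
  next
    assume b: "P1 \<le> 0" "\<not> P2 \<le> 0"
    have dv: "delta_plus d1 m = 0" "delta_plus d2 m = P2" using b by (simp_all add: dp_cases P1_def[symmetric] P2_def[symmetric])
    have "(1 - 2 * delta_plus d1 m) * (2*d2 - 1/2) - (1 - 2 * delta_plus d2 m) * (2*d1 - 1/2) = 2*d2-2*d1 + 2*(P2*(2*d1-1/2))" unfolding dv e1 by (algebra | simp add: field_simps)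
    moreover have "0 \<le> P2*(2*d1-1/2)" using a b by simp
    ultimately show ?thesis using a b by linarith
  next
    assume b: "\<not> P1 \<le> 0" "P2 \<le> 0"
    thus ?thesis using mm by simp
  next
    assume b: "\<not> P1 \<le> 0" "\<not> P2 \<le> 0"
    have dv: "delta_plus d1 m = P1" "delta_plus d2 m = P2" using b by (simp_all add: dp_cases P1_def[symmetric] P2_def[symmetric])
    have "(1 - 2 * delta_plus d1 m) * (2*d2 - 1/2) - (1 - 2 * delta_plus d2 m) * (2*d1 - 1/2) = m*(d2-d1)" unfolding dv e1 by (algebra | simp add: field_simps)
    moreover have "0 \<le> m*(d2-d1)" using a by simp
    ultimately show ?thesis using a b by linarith
  qed
  thus ?thesis using a by (intro div_cross) auto
qed

lemma L3:
  fixes x Q d1 d2 :: real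
  assumes a: "1 \<le> x" "1 \<le> Q" "0 < delta d1 x" "d1 \<le> d2" "d2 < 1/2"
  shows "(2*d2 + 1/2 - 2 * delta_plus d2 Q - delta d2 x) / delta d2 x
       \<le> (2*d1 + 1/2 - 2 * delta_plus d1 Q - delta d1 x) / delta d1 x"
proof -
  define X1 where "X1 = delta d1 x"
  define X2 where "X2 = delta d2 x"
  have p2: "0 < X2" unfolding X2_def using a delta_mono[of x d1 d2] by simp
  have p1: "0 < X1" unfolding X1_def using a by simp
  define P1 where "P1 = delta d1 Q"
  define P2 where "P2 = delta d2 Q"
  have e1: "P1 = Q*d1 - (Q-1)/2" "P2 = Q*d2 - (Q-1)/2" "X1 = x*d1 - (x-1)/2" "X2 = x*d2 - (x-1)/2"
    unfolding P1_def P2_def X1_def X2_def delta_def by simp_all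
  have mm: "P1 \<le> P2" unfolding P1_def P2_def using a by (intro delta_mono) auto
  have h3: "0 \<le> (3*x/2-1)*(d2-d1)" using a by simp
  have "0 \<le> (2*d1 + 1/2 - 2 * delta_plus d1 Q) * X2 - (2*d2 + 1/2 - 2 * delta_plus d2 Q) * X1"
  proof (cases "P1 \<le> 0"; cases "P2 \<le> 0")
    assume b: "P1 \<le> 0" "P2 \<le> 0"
    have dv: "delta_plus d1 Q = 0" "delta_plus d2 Q = 0" using b by (simp_all add: dp_cases P1_def[symmetric] P2_def[symmetric])
    have "(2*d1 + 1/2 - 2 * delta_plus d1 Q) * X2 - (2*d2 + 1/2 - 2 * delta_plus d2 Q) * X1 = (3*x/2-1)*(d2-d1)" unfolding dv e1 by (algebra | simp add: field_simps)
    thus ?thesis using h3 b by linarith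
  next
    assume b: "P1 \<le> 0" "\<not> P2 \<le> 0"
    have dv: "delta_plus d1 Q = 0" "delta_plus d2 Q = P2" using b by (simp_all add: dp_cases P1_def[symmetric] P2_def[symmetric])
    have "(2*d1 + 1/2 - 2 * delta_plus d1 Q) * X2 - (2*d2 + 1/2 - 2 * delta_plus d2 Q) * X1 = (3*x/2-1)*(d2-d1) + 2*(P2*X1)" unfolding dv e1 by (algebra | simp add: field_simps)
    moreover have "0 \<le> P2*X1" using p1 b by simp
    ultimately show ?thesis using h3 b by linarith
  next
    assume b: "\<not> P1 \<le> 0" "P2 \<le> 0"
    thus ?thesis using mm by simp
  next
    assume b: "\<not> P1 \<le> 0" "\<not> P2 \<le> 0"
    have dv: "delta_plus d1 Q = P1" "delta_plus d2 Q = P2" using b by (simp_all add: dp_cases P1_def[symmetric] P2_def[symmetric])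
    have "(2*d1 + 1/2 - 2 * delta_plus d1 Q) * X2 - (2*d2 + 1/2 - 2 * delta_plus d2 Q) * X1 = (d2-d1)*(x/2+Q-1)" unfolding dv e1 by (algebra | simp add: field_simps)
    moreover have "0 \<le> (d2-d1)*(x/2+Q-1)" using a by simp
    ultimately show ?thesis using b by linarith
  qed
  hence "(2*d2 + 1/2 - 2 * delta_plus d2 Q) / X2 \<le> (2*d1 + 1/2 - 2 * delta_plus d1 Q) / X1"
    using p1 p2 by (intro div_cross) auto
  hence "(2*d2 + 1/2 - 2 * delta_plus d2 Q) / X2 - 1 \<le> (2*d1 + 1/2 - 2 * delta_plus d1 Q) / X1 - 1" by simp
  thus ?thesis using p1 p2 unfolding X1_def[symmetric] X2_def[symmetric] by (simp add: diff_divide_distrib)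
qed

lemma L4:
  fixes q0 Q d1 d2 :: real
  assumes a: "2 \<le> q0" "q0 \<le> Q" "(1 - 1/q0)/2 < d1" "d1 \<le> d2" "d2 < 1/2"
  shows "1 + 4 * (delta d1 q0 - delta_plus d1 Q) / (1 - 2*d1)
       \<le> 1 + 4 * (delta d2 q0 - delta_plus d2 Q) / (1 - 2*d2)"
proof -
  define P1 where "P1 = delta d1 Q"
  define P2 where "P2 = delta d2 Q"
  have e1: "P1 = Q*d1 - (Q-1)/2" "P2 = Q*d2 - (Q-1)/2" unfolding P1_def P2_def delta_def by simp_all
  have mm: "P1 \<le> P2" unfolding P1_def P2_def using a by (intro delta_mono) auto
  have "0 \<le> (delta d2 q0 - delta_plus d2 Q) * (1 - 2*d1) - (delta d1 q0 - delta_plus d1 Q) * (1 - 2*d2)"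
  proof (cases "P1 \<le> 0"; cases "P2 \<le> 0")
    assume b: "P1 \<le> 0" "P2 \<le> 0"
    have dv: "delta_plus d1 Q = 0" "delta_plus d2 Q = 0" using b by (simp_all add: dp_cases P1_def[symmetric] P2_def[symmetric])
    have "(delta d2 q0 - delta_plus d2 Q) * (1 - 2*d1) - (delta d1 q0 - delta_plus d1 Q) * (1 - 2*d2) = d2 - d1"
      unfolding dv e1 delta_def by (algebra | simp add: field_simps)
    thus ?thesis using a b by linarith
  next
    assume b: "P1 \<le> 0" "\<not> P2 \<le> 0"
    have dv: "delta_plus d1 Q = 0" "delta_plus d2 Q = P2" using b by (simp_all add: dp_cases P1_def[symmetric] P2_def[symmetric])
    have "(delta d2 q0 - delta_plus d2 Q) * (1 - 2*d1) - (delta d1 q0 - delta_plus d1 Q) * (1 - 2*d2) = (1-2*d2)*(-P1)"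
      unfolding dv e1 delta_def by (algebra | simp add: field_simps)
    moreover have "0 \<le> (1-2*d2)*(-P1)" using a b by (intro mult_nonneg_nonneg) auto
    ultimately show ?thesis using a b by linarith
  next
    assume b: "\<not> P1 \<le> 0" "P2 \<le> 0"
    thus ?thesis using mm by simp
  next
    assume b: "\<not> P1 \<le> 0" "\<not> P2 \<le> 0"
    have dv: "delta_plus d1 Q = P1" "delta_plus d2 Q = P2" using b by (simp_all add: dp_cases P1_def[symmetric] P2_def[symmetric])
    have "(delta d2 q0 - delta_plus d2 Q) * (1 - 2*d1) - (delta d1 q0 - delta_plus d1 Q) * (1 - 2*d2) = 0"
      unfolding dv e1 delta_def by (algebra | simp add: field_simps)
    thus ?thesis using b by linarith
  qed
  hence "(delta d1 q0 - delta_plus d1 Q) / (1 - 2*d1) \<le> (delta d2 q0 - delta_plus d2 Q) / (1 - 2*d2)"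
    using a by (intro div_cross) auto
  hence "4 * ((delta d1 q0 - delta_plus d1 Q) / (1 - 2*d1)) \<le> 4 * ((delta d2 q0 - delta_plus d2 Q) / (1 - 2*d2))"
    by (rule mult_left_mono) auto
  thus ?thesis by (simp only: times_divide_eq_right add_le_cancel_left)
qed

lemma adm_down: "admissible_seq L q \<Longrightarrow> m \<in> L \<Longrightarrow> k \<le> m \<Longrightarrow> k \<in> L"
proof (induction m)
  case 0 thus ?case by simp
next
  case (Suc m)
  show ?case
  proof (cases "k = Suc m")
    case True thus ?thesis using Suc by simp
  next
    case False
    have "m \<in> L" using Suc.prems unfolding admissible_seq_def by blast
    thus ?thesis using Suc False by simp
  qed
qed

lemma adm_one: "admissible_seq L q \<Longrightarrow> L \<noteq> {0} \<Longrightarrow> 1 \<in> L"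
proof -
  assume a: "admissible_seq L q" "L \<noteq> {0}"
  have "0 \<in> L" using a unfolding admissible_seq_def by blast
  then obtain m where "m \<in> L" "m \<noteq> 0" using a by blast
  thus ?thesis using adm_down[OF a(1)] by (metis One_nat_def Suc_leI gr0I)
qed

lemma adm_ge0: "admissible_seq L q \<Longrightarrow> l \<in> L \<Longrightarrow> q 0 \<le> q l"
proof -
  assume a: "admissible_seq L q" "l \<in> L"
  show ?thesis
  proof (cases "l = 0")
    case False
    hence "q 0 < q l" using a unfolding admissible_seq_def by blast
    thus ?thesis by simp
  qed simp
qed

lemma ell_mem: "Iset L q r \<noteq> {} \<Longrightarrow> ell L q r \<in> Iset L q r"
  unfolding ell_def by (metis LeastI_ex ex_in_conv)

lemma ell_L: "Iset L q r \<noteq> {} \<Longrightarrow> ell L q r \<in> L"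
  using ell_mem unfolding Iset_def by blast

lemma R_sub_J: "r \<in> Rset L q d \<Longrightarrow> Jset L q d \<noteq> {}"
proof -
  assume "r \<in> Rset L q d"
  hence r: "Iset L q r \<noteq> {}" "delta d (real (r+1)) > 0" unfolding Rset_def by auto
  then obtain l where l: "l \<in> Iset L q r" by blast
  hence "real (q (Suc l)) - real (q l) = real (r+1)" unfolding Iset_def by auto
  hence "l \<in> Jset L q d" using l r unfolding Iset_def Jset_def by auto
  thus ?thesis by blast
qed

lemma nu_big:
  assumes "L \<noteq> {0}" "q 0 = 1" "1/4 < d"
  shows "nu_c L q d = min (ereal ((1 - 2 * delta_plus d (real (q 1) - 1)) / (2*d - 1/2)))
                 (INF r\<in>Rset L q d.
                    ereal ((2*d + 1/2 - 2 * delta_plus d (real (q (ell L q r)))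
                             - delta d (real (r + 1))) / delta d (real (r + 1))))"
proof (cases "Jset L q d = {}")
  case True
  hence "Rset L q d = {}" using R_sub_J by blast
  thus ?thesis using assms True unfolding nu_c_def by simp
next
  case False
  thus ?thesis using assms unfolding nu_c_def by simp
qed

lemma part1:
  assumes adm: "admissible_seq L q" and q0: "q 0 = 1"
    and d: "0 < d1" "d1 \<le> d2" "d2 < 1/2"
  shows "nu_c L q d2 \<le> nu_c L q d1"
proof (cases "L = {0}")
  case True thus ?thesis unfolding nu_c_def by simp
next
  case L: False
  have Qge: "1 \<le> real (q (ell L q r))" if "Iset L q r \<noteq> {}" for r
    using adm_ge0[OF adm ell_L[OF that]] q0 by simp
  define f where "f d = (d + 1/2 - 2 * delta_plus d (real (q (ell L q 0)))) / d" for d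
  have fm: "f d2 \<le> f d1" if "Iset L q 0 \<noteq> {}" unfolding f_def using L1[OF Qge[OF that] d] .
  define A where "A d = (1 - 2 * delta_plus d (real (q 1) - 1)) / (2*d - 1/2)" for d
  define B where "B r d = (2*d + 1/2 - 2 * delta_plus d (real (q (ell L q r)))
                             - delta d (real (r + 1))) / delta d (real (r + 1))" for r d
  have nb: "nu_c L q d = min (ereal (A d)) (INF r\<in>Rset L q d. ereal (B r d))" if "1/4 < d" for d
    unfolding A_def B_def using nu_big[of L q d, OF L q0 that] .
  have ns: "nu_c L q d = (if Iset L q 0 = {} then \<infinity> else ereal (f d))" if "d \<le> 1/4" for d
    using L q0 that unfolding nu_c_def f_def by simp
  have B0: "B 0 d = f d" if "0 < d" for d
  proof -
    have "delta d (real (0+1)) = d" unfolding delta_def by simp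
    thus ?thesis unfolding B_def f_def using that by (simp add: field_simps)
  qed
  show ?thesis
  proof (cases "d2 \<le> 1/4")
    case True
    thus ?thesis using ns[of d1] ns[of d2] d fm by auto
  next
    case d2: False
    show ?thesis
    proof (cases "d1 \<le> 1/4")
      case d1: True
      show ?thesis
      proof (cases "Iset L q 0 = {}")
        case True thus ?thesis using ns[OF d1] by simp
      next
        case I0: False
        have "0 \<in> Rset L q d2" unfolding Rset_def delta_def using I0 d by simp
        hence "(INF r\<in>Rset L q d2. ereal (B r d2)) \<le> ereal (B 0 d2)" by (rule INF_lower)
        hence "nu_c L q d2 \<le> ereal (f d2)" using nb[of d2] d2 B0[of d2] d
          by (simp add: min_le_iff_disj)
        also have "\<dots> \<le> ereal (f d1)" using fm[OF I0] by simp
        also have "\<dots> = nu_c L q d1" using ns[OF d1] I0 by simp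
        finally show ?thesis .
      qed
    next
      case d1: False
      have one: "1 \<in> L" using adm_one[OF adm L] .
      have "q 0 < q 1" using adm one unfolding admissible_seq_def by blast
      hence m1: "1 \<le> real (q 1) - 1" using q0 by simp
      have Am: "A d2 \<le> A d1" unfolding A_def using L2[OF m1] d d1 by simp
      have Im: "(INF r\<in>Rset L q d2. ereal (B r d2)) \<le> (INF r\<in>Rset L q d1. ereal (B r d1))"
      proof (rule INF_mono)
        fix r assume r: "r \<in> Rset L q d1"
        hence I: "Iset L q r \<noteq> {}" and p: "0 < delta d1 (real (r+1))" unfolding Rset_def by auto
        have "delta d1 (real (r+1)) \<le> delta d2 (real (r+1))" using d by (intro delta_mono) auto
        hence "r \<in> Rset L q d2" using I p unfolding Rset_def by simp
        moreover have "B r d2 \<le> B r d1" unfolding B_def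
          by (rule L3) (use Qge[OF I] p d in auto)
        ultimately show "\<exists>n\<in>Rset L q d2. ereal (B n d2) \<le> ereal (B r d1)" by auto
      qed
      have "1/4 < d1" "1/4 < d2" using d1 d2 by auto
      hence "nu_c L q d2 = min (ereal (A d2)) (INF r\<in>Rset L q d2. ereal (B r d2))"
        "nu_c L q d1 = min (ereal (A d1)) (INF r\<in>Rset L q d1. ereal (B r d1))" using nb by auto
      thus ?thesis by (simp only:) (rule min.mono, use Am Im in auto)
    qed
  qed
qed

lemma part2:
  assumes adm: "admissible_seq L q" and q0: "2 \<le> q 0"
    and d: "(1 - 1 / real (q 0)) / 2 < d1" "d1 \<le> d2" "d2 < 1/2"
  shows "nu_c L q d1 \<le> nu_c L q d2"
proof (cases "L = {0}")
  case True thus ?thesis unfolding nu_c_def by simp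
next
  case L: False
  show ?thesis
  proof (cases "Iset L q 0 = {}")
    case True thus ?thesis using L q0 unfolding nu_c_def by simp
  next
    case I: False
    have Qge: "real (q 0) \<le> real (q (ell L q 0))"
      using adm_ge0[OF adm ell_L[OF I]] by simp
    have q0r: "2 \<le> real (q 0)" using q0 by simp
    show ?thesis using L q0 I L4[OF q0r Qge d] unfolding nu_c_def by simp
  qed
qed

theorem lemma9p5:
  fixes L :: "nat set" and q :: "nat \<Rightarrow> nat"
  assumes "admissible_seq L q"
  shows "(q 0 = 1 \<longrightarrow>
            (\<forall>d1 d2. (1 - 1 / real (q 0)) / 2 < d1 \<and> d1 \<le> d2 \<and> d2 < 1/2
                 \<longrightarrow> nu_c L q d2 \<le> nu_c L q d1))
       \<and> (q 0 \<ge> 2 \<longrightarrow>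
            (\<forall>d1 d2. (1 - 1 / real (q 0)) / 2 < d1 \<and> d1 \<le> d2 \<and> d2 < 1/2
                 \<longrightarrow> nu_c L q d1 \<le> nu_c L q d2))"
  using part1[OF assms] part2[OF assms] by auto

end
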